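(* Let $\mathfrak I_M=\{\langle v,v\rangle\}\cup\{\langle M^kv,M^kv\rangle:1\le k<d\}$, where $\langle a,b\rangle=\sum_ia_ib_i$. Then $\mathfrak I_M$ generates both the field $\mathbb C(\mathbb C^d\oplus\mathfrak{so}(d,\mathbb C))^{O_d(\mathbb C)}$ and the field $\mathbb R(\mathbb R^d\oplus\mathfrak{so}(d,\mathbb R))^{O_d(\mathbb R)}$, and separates orbits on $\mathbb C^d\oplus\mathfrak{so}(d,\mathbb C)$ (for $O_d(\mathbb C)$) and on $\mathbb R^d\oplus\mathfrak{so}(d,\mathbb R)$ (for $O_d(\mathbb R)$).
   Context: Fix $d\ge2$. Elements of $\mathbb K^d\oplus\mathfrak{so}(d,\mathbb K)$ ($\mathbb K=\mathbb R$ or $\mathbb C$) are pairs $(v,M)$, $v\in\mathbb K^d$, $M$ a skew-symmetric $d\times d$ matrix over $\mathbb K$; $O_d(\mathbb K)=\{A\in\mathbb K^{d\times d}:AA^\top=I\}$ acts by $A\cdot(v,M)=(Av,AMA^\top)$. $\mathbb K(X)^G$ denotes the field of $G$-invariant rational functions on $X$ with coefficients in $\mathbb K$; "generates" means generates as a field over $\mathbb K$. A set of invariants separates orbits if there is a non-empty Zariski-open subset on which two points lie in the same orbit if and only if all invariants in the set take equal values on them. *)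

theory Defs
  imports "HOL-Analysis.Analysis"
begin

(* Points of K^d (+) so(d,K): pairs (v, M); d = CARD('n). *)
type_synonym ('a,'n) pt = "('a ^ 'n) \<times> ('a ^ 'n ^ 'n)"

definition skew_pts :: "('a::field, 'n::finite) pt set" where
  "skew_pts = {(v, M). transpose M = - M}"

definition orth_group :: "('a::field ^ 'n ^ 'n) set" where
  "orth_group = {A. A ** transpose A = mat 1}"

definition act :: "'a::field ^ 'n ^ 'n \<Rightarrow> ('a, 'n) pt \<Rightarrow> ('a, 'n) pt" where
  "act A x = (A *v fst x, A ** snd x ** transpose A)"

(* the K-algebra of functions generated by a set C of functions *)
inductive_set polyfuns :: "('x \<Rightarrow> 'a::field) set \<Rightarrow> ('x \<Rightarrow> 'a) set" for C where
  gen: "f \<in> C \<Longrightarrow> f \<in> polyfuns C"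
| const: "(\<lambda>_. c) \<in> polyfuns C"
| add: "f \<in> polyfuns C \<Longrightarrow> g \<in> polyfuns C \<Longrightarrow> (\<lambda>x. f x + g x) \<in> polyfuns C"
| mult: "f \<in> polyfuns C \<Longrightarrow> g \<in> polyfuns C \<Longrightarrow> (\<lambda>x. f x * g x) \<in> polyfuns C"

(* coordinate functions on K^d x K^{d x d} *)
definition coord_funs :: "(('a::field, 'n::finite) pt \<Rightarrow> 'a) set" where
  "coord_funs = {(\<lambda>x. fst x $ i) | i. True} \<union> {(\<lambda>x. snd x $ i $ j) | i j. True}"

(* polynomial functions with coefficients in K *)
definition poly_funs :: "(('a::field, 'n::finite) pt \<Rightarrow> 'a) set" where
  "poly_funs = polyfuns coord_funs"

(* the symmetric bilinear form <a,b> = sum_i a_i b_i (no conjugation) *)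
definition bil :: "'a::field ^ 'n \<Rightarrow> 'a ^ 'n \<Rightarrow> 'a" where
  "bil a b = (\<Sum>i\<in>UNIV. a $ i * b $ i)"

(* I_k(v,M) = <M^k v, M^k v>; k = 0 gives <v,v> *)
definition inv_k :: "nat \<Rightarrow> ('a::field, 'n::finite) pt \<Rightarrow> 'a" where
  "inv_k k x = (let w = (((*v) (snd x)) ^^ k) (fst x) in bil w w)"

definition invariants_I :: "(('a::field, 'n::finite) pt \<Rightarrow> 'a) set" where
  "invariants_I = {inv_k k | k. k < CARD('n)}"

(* p/q (q not identically zero on the space) is an O_d-invariant rational function *)
definition rat_invariant :: "(('a::field, 'n::finite) pt \<Rightarrow> 'a) \<Rightarrow> (('a, 'n) pt \<Rightarrow> 'a) \<Rightarrow> bool" where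
  "rat_invariant p q \<longleftrightarrow> p \<in> poly_funs \<and> q \<in> poly_funs \<and> (\<exists>x\<in>skew_pts. q x \<noteq> 0) \<and>
     (\<forall>A\<in>orth_group. \<forall>x\<in>skew_pts. p (act A x) * q x = p x * q (act A x))"

(* p/q lies in the subfield of K(X) generated over K by the invariants I_M *)
definition in_generated_field :: "(('a::field, 'n::finite) pt \<Rightarrow> 'a) \<Rightarrow> (('a, 'n) pt \<Rightarrow> 'a) \<Rightarrow> bool" where
  "in_generated_field p q \<longleftrightarrow> (\<exists>P\<in>polyfuns invariants_I. \<exists>Q\<in>polyfuns invariants_I.
     (\<exists>x\<in>skew_pts. Q x \<noteq> 0) \<and> (\<forall>x\<in>skew_pts. p x * Q x = q x * P x))"

definition generates_invariant_field :: "('a::field \<times> 'n::finite) itself \<Rightarrow> bool" where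
  "generates_invariant_field _ \<longleftrightarrow>
     (\<forall>f\<in>(invariants_I :: (('a, 'n) pt \<Rightarrow> 'a) set). rat_invariant f (\<lambda>_. 1)) \<and>
     (\<forall>p q :: ('a, 'n) pt \<Rightarrow> 'a. rat_invariant p q \<longrightarrow> in_generated_field p q)"

(* Zariski-open subsets of the space X = K^d (+) so(d,K) *)
definition zariski_open :: "('a::field, 'n::finite) pt set \<Rightarrow> bool" where
  "zariski_open U \<longleftrightarrow> (\<exists>F\<subseteq>poly_funs. U = skew_pts - {x\<in>skew_pts. \<forall>f\<in>F. f x = 0})"

definition separates_orbits :: "('a::field \<times> 'n::finite) itself \<Rightarrow> bool" where
  "separates_orbits _ \<longleftrightarrow> (\<exists>U :: ('a, 'n) pt set. zariski_open U \<and> U \<noteq> {} \<and>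
     (\<forall>x\<in>U. \<forall>y\<in>U. (\<exists>A\<in>orth_group. act A x = y) \<longleftrightarrow> (\<forall>f\<in>invariants_I. f x = f y)))"

end

theory Submission
  imports Defs "HOL-Computational_Algebra.Polynomial"
begin

section \<open>Closure of polyfuns\<close>

lemma polyfuns_const_mult: "f \<in> polyfuns C \<Longrightarrow> (\<lambda>x. c * f x) \<in> polyfuns C"
  using polyfuns.mult[OF polyfuns.const] by blast

lemma polyfuns_diff: "f \<in> polyfuns C \<Longrightarrow> g \<in> polyfuns C \<Longrightarrow> (\<lambda>x. f x - g x) \<in> polyfuns C"
proof -
  assume f: "f \<in> polyfuns C" and g: "g \<in> polyfuns C"
  have "(\<lambda>x. f x + (-1) * g x) \<in> polyfuns C"
    by (intro polyfuns.add f polyfuns_const_mult g)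
  thus ?thesis by simp
qed

lemma polyfuns_sum: "finite S \<Longrightarrow> (\<And>i. i \<in> S \<Longrightarrow> f i \<in> polyfuns C) \<Longrightarrow> (\<lambda>x. \<Sum>i\<in>S. f i x) \<in> polyfuns C"
proof (induction S rule: finite_induct)
  case empty
  then show ?case using polyfuns.const[of 0] by simp
next
  case (insert a S)
  then show ?case using polyfuns.add[of "f a" C "\<lambda>x. \<Sum>i\<in>S. f i x"] by simp
qed

lemma polyfuns_prod: "finite S \<Longrightarrow> (\<And>i. i \<in> S \<Longrightarrow> f i \<in> polyfuns C) \<Longrightarrow> (\<lambda>x. \<Prod>i\<in>S. f i x) \<in> polyfuns C"
proof (induction S rule: finite_induct)
  case empty
  then show ?case using polyfuns.const[of 1] by simp
next
  case (insert a S)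
  then show ?case using polyfuns.mult[of "f a" C "\<lambda>x. \<Prod>i\<in>S. f i x"] by simp
qed

lemma polyfuns_mono: assumes "C \<subseteq> polyfuns D" "f \<in> polyfuns C" shows "f \<in> polyfuns D"
  using assms(2) by (induction rule: polyfuns.induct) (use assms(1) in \<open>auto intro: polyfuns.intros\<close>)

lemma polyfuns_eqI: assumes "\<And>f. f \<in> C \<Longrightarrow> f x = f y" "P \<in> polyfuns C" shows "P x = P y"
  using assms(2) by (induction rule: polyfuns.induct) (auto simp: assms(1))

section \<open>Polynomial functions\<close>

definition wv :: "('a::field, 'n::finite) pt \<Rightarrow> nat \<Rightarrow> 'a ^ 'n" where
  "wv x k = (((*v) (snd x)) ^^ k) (fst x)"

lemma wv_0: "wv x 0 = fst x" by (simp add: wv_def)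
lemma wv_Suc: "wv x (Suc k) = snd x *v wv x k" by (simp add: wv_def)

lemma inv_k_wv: "inv_k k x = bil (wv x k) (wv x k)"
  by (simp add: inv_k_def wv_def Let_def)

lemma coord_v: "(\<lambda>x. fst x $ i) \<in> poly_funs"
  unfolding poly_funs_def coord_funs_def by (rule polyfuns.gen) blast

lemma coord_M: "(\<lambda>x. snd x $ i $ j) \<in> poly_funs"
  unfolding poly_funs_def coord_funs_def by (rule polyfuns.gen) blast

lemma poly_funs_add: "f \<in> poly_funs \<Longrightarrow> g \<in> poly_funs \<Longrightarrow> (\<lambda>x. f x + g x) \<in> poly_funs"
  unfolding poly_funs_def by (rule polyfuns.add)
lemma poly_funs_mult: "f \<in> poly_funs \<Longrightarrow> g \<in> poly_funs \<Longrightarrow> (\<lambda>x. f x * g x) \<in> poly_funs"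
  unfolding poly_funs_def by (rule polyfuns.mult)
lemma poly_funs_sum: "finite S \<Longrightarrow> (\<And>i. i \<in> S \<Longrightarrow> f i \<in> poly_funs) \<Longrightarrow> (\<lambda>x. \<Sum>i\<in>S. f i x) \<in> poly_funs"
  unfolding poly_funs_def by (rule polyfuns_sum)

lemma wv_poly: "(\<lambda>x. wv x k $ i) \<in> poly_funs"
proof (induction k arbitrary: i)
  case 0
  then show ?case by (simp add: wv_0 coord_v)
next
  case (Suc k)
  show ?case
    unfolding wv_Suc matrix_vector_mult_def vec_lambda_beta
    by (intro poly_funs_sum poly_funs_mult coord_M Suc) auto
qed

lemma bil_poly: "(\<And>i. (\<lambda>x. a x $ i) \<in> poly_funs) \<Longrightarrow> (\<And>i. (\<lambda>x. b x $ i) \<in> poly_funs) \<Longrightarrow>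
   (\<lambda>x. bil (a x) (b x)) \<in> poly_funs"
  unfolding bil_def by (intro poly_funs_sum poly_funs_mult) auto

lemma inv_k_poly: "inv_k k \<in> poly_funs"
proof -
  have "(\<lambda>x. bil (wv x k) (wv x k)) \<in> poly_funs" by (intro bil_poly wv_poly)
  thus ?thesis by (simp add: inv_k_wv[abs_def])
qed

lemma invariants_poly: "invariants_I \<subseteq> poly_funs"
  unfolding invariants_I_def using inv_k_poly by blast

lemma polyfuns_I_poly: "P \<in> polyfuns invariants_I \<Longrightarrow> P \<in> poly_funs"
  unfolding poly_funs_def using invariants_poly polyfuns_mono unfolding poly_funs_def by blast

lemma bil_sym: "bil a b = bil b a"
  unfolding bil_def by (simp add: mult.commute)
lemma bil_add_left: "bil (a + b) c = bil a c + bil b c"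
  unfolding bil_def by (simp add: distrib_right sum.distrib)
lemma bil_add_right: "bil c (a + b) = bil c a + bil c b"
  unfolding bil_def by (simp add: distrib_left sum.distrib)
lemma bil_diff_left: "bil (a - b) c = bil a c - bil b c"
  unfolding bil_def by (simp add: left_diff_distrib sum_subtractf)
lemma bil_diff_right: "bil c (a - b) = bil c a - bil c b"
  unfolding bil_def by (simp add: right_diff_distrib sum_subtractf)
lemma bil_scale_left: "bil (r *s a) b = r * bil a b"
  unfolding bil_def by (simp add: sum_distrib_left mult.assoc)
lemma bil_scale_right: "bil a (r *s b) = r * bil a b"
  unfolding bil_def by (simp add: sum_distrib_left mult_ac)
lemma bil_sum_left: "bil (\<Sum>i\<in>S. f i) b = (\<Sum>i\<in>S. bil (f i) b)"
  unfolding bil_def by (induction S rule: infinite_finite_induct) (auto simp: sum.distrib distrib_right)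
lemma bil_sum_right: "bil b (\<Sum>i\<in>S. f i) = (\<Sum>i\<in>S. bil b (f i))"
  using bil_sum_left[of f S b] by (simp add: bil_sym)

lemma bil_matrix: "bil (A *v a) b = bil a (transpose A *v b)"
  unfolding bil_def matrix_vector_mult_def transpose_def
  by (simp add: sum_distrib_right sum_distrib_left mult_ac) (rule sum.swap)

lemma bil_skew:
  assumes "transpose M = - M"
  shows "bil (M *v a) b = - bil a (M *v b)"
proof -
  have "bil (M *v a) b = bil a ((- M) *v b)" by (simp add: bil_matrix assms)
  also have "(- M) *v b = - (M *v b)"
    by (simp add: vec_eq_iff matrix_vector_mult_def sum_negf)
  also have "bil a (- (M *v b)) = - bil a (M *v b)"
    unfolding bil_def by (simp add: sum_negf)
  finally show ?thesis .
qed

lemma bil_skew_self: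
  fixes M :: "'a::field_char_0 ^'n::finite^'n"
  assumes "transpose M = - M"
  shows "bil a (M *v a) = 0"
proof -
  have "bil (M *v a) a = - bil a (M *v a)" by (rule bil_skew[OF assms])
  hence "bil a (M *v a) = - bil a (M *v a)" by (simp add: bil_sym)
  thus ?thesis by simp
qed

section \<open>Orthogonal group\<close>

lemma orth_left: "A \<in> orth_group \<Longrightarrow> transpose A ** A = mat 1"
  unfolding orth_group_def using matrix_left_right_inverse by blast

lemma orth_transpose: "A \<in> orth_group \<Longrightarrow> transpose A \<in> orth_group"
  using orth_left[of A] unfolding orth_group_def by simp

lemma orth_mult: "A \<in> orth_group \<Longrightarrow> B \<in> orth_group \<Longrightarrow> B ** A \<in> orth_group"
  unfolding orth_group_def
  by (simp add: matrix_transpose_mul matrix_mul_assoc)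
     (metis matrix_mul_assoc matrix_mul_rid)

lemma orth_one: "mat 1 \<in> orth_group"
  unfolding orth_group_def by simp

lemma act_act: "act B (act A x) = act (B ** A) x"
  unfolding act_def by (simp add: matrix_vector_mul_assoc matrix_transpose_mul matrix_mul_assoc)

lemma act_one: "act (mat 1) x = x"
  unfolding act_def by simp

lemma bil_orth: "A \<in> orth_group \<Longrightarrow> bil (A *v a) (A *v b) = bil a b"
  by (simp add: bil_matrix matrix_vector_mul_assoc orth_left)

lemma wv_act: "A \<in> orth_group \<Longrightarrow> wv (act A x) k = A *v wv x k"
proof (induction k)
  case 0 then show ?case by (simp add: wv_0 act_def)
next
  case (Suc k)
  have "wv (act A x) (Suc k) = (A ** snd x ** transpose A) *v (A *v wv x k)"
    using Suc by (simp add: wv_Suc act_def)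
  also have "\<dots> = A *v (snd x *v wv x k)"
    using orth_left[OF Suc.prems]
    by (simp add: matrix_vector_mul_assoc matrix_mul_assoc)
       (metis matrix_mul_assoc matrix_mul_rid)
  finally show ?case by (simp add: wv_Suc)
qed

lemma inv_k_act: "A \<in> orth_group \<Longrightarrow> inv_k k (act A x) = inv_k k x"
  by (simp add: inv_k_wv wv_act bil_orth)

lemma matrix_mul_lneg: "(- A) ** B = - (A ** (B::'a::ring_1^'n^'m))"
  by (simp add: matrix_matrix_mult_def vec_eq_iff sum_negf)
lemma matrix_mul_rneg: "A ** (- B) = - (A ** (B::'a::ring_1^'n^'m))"
  by (simp add: matrix_matrix_mult_def vec_eq_iff sum_negf)

lemma act_skew: "x \<in> skew_pts \<Longrightarrow> act A x \<in> skew_pts"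
  unfolding skew_pts_def act_def
  by (auto simp: matrix_transpose_mul matrix_mul_assoc)
     (metis matrix_mul_assoc matrix_mul_lneg matrix_mul_rneg)

section \<open>Gram matrix of Krylov vectors\<close>

definition gramI :: "nat \<Rightarrow> nat \<Rightarrow> ('a::field, 'n::finite) pt \<Rightarrow> 'a" where
  "gramI i j x = (if even (i + j) then (-1) ^ i * (-1) ^ ((i + j) div 2) * inv_k ((i + j) div 2) x else 0)"

lemma skewD: "x \<in> skew_pts \<Longrightarrow> transpose (snd x) = - snd x"
  unfolding skew_pts_def by auto

lemma gram_shift:
  assumes "x \<in> skew_pts"
  shows "bil (wv x i) (wv x j) = (-1) ^ i * bil (wv x 0) (wv x (i + j))"
proof (induction i arbitrary: j)
  case 0 then show ?case by simp
next
  case (Suc i)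
  have "bil (wv x (Suc i)) (wv x j) = - bil (wv x i) (wv x (Suc j))"
    by (simp add: wv_Suc bil_skew[OF skewD[OF assms]])
  also have "\<dots> = - ((-1) ^ i * bil (wv x 0) (wv x (i + Suc j)))" using Suc by simp
  finally show ?case by simp
qed

lemma gram_formula:
  fixes x :: "('a::field_char_0, 'n::finite) pt"
  assumes "x \<in> skew_pts"
  shows "bil (wv x i) (wv x j) = gramI i j x"
proof -
  have T: "bil (wv x i) (wv x j) = (-1) ^ i * bil (wv x 0) (wv x (i + j))" for i j
    by (rule gram_shift[OF assms])
  show ?thesis
  proof (cases "even (i + j)")
    case True
    then obtain m where m: "i + j = 2 * m" by (metis evenE)
    have "inv_k m x = (-1) ^ m * bil (wv x 0) (wv x (2 * m))"
      using T[of m m] by (simp add: inv_k_wv mult_2)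
    hence "bil (wv x 0) (wv x (2 * m)) = (-1) ^ m * inv_k m x"
      by (metis (no_types, lifting) minus_one_mult_self mult.assoc mult_1)
    thus ?thesis using T[of i j] m True by (simp add: gramI_def)
  next
    case False
    then obtain m where m: "i + j = 2 * m + 1" by (metis oddE)
    have "bil (wv x m) (wv x (Suc m)) = 0"
      by (simp add: wv_Suc bil_skew_self[OF skewD[OF assms]])
    hence "bil (wv x 0) (wv x (2 * m + 1)) = 0" using T[of m "Suc m"] by (simp add: mult_2)
    thus ?thesis using T[of i j] m False by (simp add: gramI_def)
  qed
qed

lemma inv_in_I: "k < CARD('n) \<Longrightarrow> (inv_k k :: ('a::field,'n::finite) pt \<Rightarrow> 'a) \<in> polyfuns invariants_I"
  unfolding invariants_I_def by (rule polyfuns.gen) blast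

lemma gramI_I: "(i + j) div 2 < CARD('n) \<Longrightarrow> (gramI i j :: ('a::field,'n::finite) pt \<Rightarrow> 'a) \<in> polyfuns invariants_I"
proof (cases "even (i + j)")
  case True
  assume "(i + j) div 2 < CARD('n)"
  then show ?thesis using True unfolding gramI_def
    by (simp add: polyfuns_const_mult inv_in_I mult.assoc)
next
  case False
  then show ?thesis unfolding gramI_def by (simp add: polyfuns.const)
qed

section \<open>Gram-Schmidt\<close>

fun ysl :: "('a::field, 'n::finite) pt \<Rightarrow> nat \<Rightarrow> ('a ^ 'n) list" where
  "ysl x 0 = []"
| "ysl x (Suc k) = ysl x k @ [wv x k - (\<Sum>l<k. (bil (wv x k) (ysl x k ! l) / bil (ysl x k ! l) (ysl x k ! l)) *s (ysl x k ! l))]"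

definition yv :: "('a::field, 'n::finite) pt \<Rightarrow> nat \<Rightarrow> 'a ^ 'n" where
  "yv x k = ysl x (Suc k) ! k"

definition Dv :: "('a::field, 'n::finite) pt \<Rightarrow> nat \<Rightarrow> 'a" where
  "Dv x k = bil (yv x k) (yv x k)"

lemma length_ysl [simp]: "length (ysl x k) = k"
  by (induction k) auto

lemma ysl_nth: "l < k \<Longrightarrow> ysl x k ! l = yv x l"
proof (induction k)
  case 0 then show ?case by simp
next
  case (Suc k)
  show ?case
  proof (cases "l < k")
    case True
    then show ?thesis using Suc by (simp add: nth_append)
  next
    case False
    then have "l = k" using Suc by simp
    then show ?thesis by (simp add: yv_def)
  qed
qed

lemma yv_eq: "yv x k = wv x k - (\<Sum>l<k. (bil (wv x k) (yv x l) / Dv x l) *s yv x l)"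
proof -
  have "yv x k = wv x k - (\<Sum>l<k. (bil (wv x k) (ysl x k ! l) / bil (ysl x k ! l) (ysl x k ! l)) *s (ysl x k ! l))"
    by (simp add: yv_def nth_append)
  also have "(\<Sum>l<k. (bil (wv x k) (ysl x k ! l) / bil (ysl x k ! l) (ysl x k ! l)) *s (ysl x k ! l))
     = (\<Sum>l<k. (bil (wv x k) (yv x l) / Dv x l) *s yv x l)"
    by (rule sum.cong) (auto simp: ysl_nth Dv_def)
  finally show ?thesis .
qed

lemma yv_orth_lt:
  assumes "\<forall>l<K. Dv x l \<noteq> 0"
  shows "k < K \<Longrightarrow> l < k \<Longrightarrow> bil (yv x k) (yv x l) = 0"
proof (induction k arbitrary: l rule: less_induct)
  case (less k)
  have o: "bil (yv x j) (yv x l) = 0" if "j < k" "j \<noteq> l" "l < k" for j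
  proof (cases "l < j")
    case True then show ?thesis using less that by auto
  next
    case False
    then have "j < l" using that by simp
    then show ?thesis using less.IH[of l j] that less.prems by (simp add: bil_sym)
  qed
  have "bil (yv x k) (yv x l) = bil (wv x k) (yv x l) - (\<Sum>j<k. (bil (wv x k) (yv x j) / Dv x j) * bil (yv x j) (yv x l))"
    by (subst yv_eq) (simp add: bil_diff_left bil_sum_left bil_scale_left)
  also have "(\<Sum>j<k. (bil (wv x k) (yv x j) / Dv x j) * bil (yv x j) (yv x l))
      = (bil (wv x k) (yv x l) / Dv x l) * bil (yv x l) (yv x l)"
    using less.prems by (subst sum.remove[of _ l]) (auto intro!: sum.neutral simp: o)
  also have "\<dots> = bil (wv x k) (yv x l)"
    using assms less.prems by (simp add: Dv_def)
  finally show ?case by simp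
qed

lemma yv_orth:
  assumes "\<forall>l<K. Dv x l \<noteq> 0" "i < K" "j < K" "i \<noteq> j"
  shows "bil (yv x i) (yv x j) = 0"
proof (cases "j < i")
  case True then show ?thesis using yv_orth_lt[OF assms(1)] assms by blast
next
  case False
  then have "i < j" using assms by simp
  then show ?thesis using yv_orth_lt[OF assms(1), of j i] assms by (simp add: bil_sym)
qed

section \<open>Rational functions of the invariants\<close>

definition RI :: "('a::field, 'n::finite) pt set \<Rightarrow> (('a, 'n) pt \<Rightarrow> 'a) \<Rightarrow> bool" where
  "RI U h \<longleftrightarrow> (\<exists>P\<in>polyfuns invariants_I. \<exists>Q\<in>polyfuns invariants_I. \<forall>x\<in>U. Q x \<noteq> 0 \<and> h x = P x / Q x)"

lemma RI_I: "P \<in> polyfuns invariants_I \<Longrightarrow> RI U P"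
  unfolding RI_def by (rule bexI[of _ P], rule bexI[of _ "\<lambda>_. 1"]) (auto intro: polyfuns.const)

lemma RI_const: "RI U (\<lambda>_. c)"
  by (rule RI_I) (rule polyfuns.const)

lemma RI_mono: "RI U h \<Longrightarrow> V \<subseteq> U \<Longrightarrow> RI V h"
  unfolding RI_def by blast

lemma RI_cong: "RI U h \<Longrightarrow> (\<And>x. x \<in> U \<Longrightarrow> h x = h' x) \<Longrightarrow> RI U h'"
  unfolding RI_def by metis

lemma RI_add: "RI U f \<Longrightarrow> RI U g \<Longrightarrow> RI U (\<lambda>x. f x + g x)"
proof -
  assume "RI U f" "RI U g"
  then obtain P Q where PQ1: "P \<in> polyfuns invariants_I" "Q \<in> polyfuns invariants_I"
    and h1: "\<forall>x\<in>U. Q x \<noteq> 0 \<and> f x = P x / Q x" unfolding RI_def by blast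
  obtain P' Q' where PQ2: "P' \<in> polyfuns invariants_I" "Q' \<in> polyfuns invariants_I"
    and h2: "\<forall>x\<in>U. Q' x \<noteq> 0 \<and> g x = P' x / Q' x" using \<open>RI U g\<close> unfolding RI_def by blast
  note PQ = PQ1 PQ2
  have A: "(\<lambda>x. P x * Q' x + P' x * Q x) \<in> polyfuns invariants_I"
    using PQ by (intro polyfuns.add polyfuns.mult)
  have B: "(\<lambda>x. Q x * Q' x) \<in> polyfuns invariants_I"
    using PQ by (intro polyfuns.mult)
  have C: "\<forall>x\<in>U. Q x * Q' x \<noteq> 0 \<and> f x + g x = (P x * Q' x + P' x * Q x) / (Q x * Q' x)"
  proof
    fix x assume x: "x \<in> U"
    then have "Q x \<noteq> 0" "Q' x \<noteq> 0" "f x = P x / Q x" "g x = P' x / Q' x" using h1 h2 by auto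
    then show "Q x * Q' x \<noteq> 0 \<and> f x + g x = (P x * Q' x + P' x * Q x) / (Q x * Q' x)"
      by (simp add: add_divide_eq_iff divide_add_eq_iff field_simps)
  qed
  show ?thesis unfolding RI_def
    apply (rule bexI[OF _ A]) apply (rule bexI[OF _ B]) using C by blast
qed

lemma RI_mult: "RI U f \<Longrightarrow> RI U g \<Longrightarrow> RI U (\<lambda>x. f x * g x)"
proof -
  assume "RI U f" "RI U g"
  then obtain P Q where PQ1: "P \<in> polyfuns invariants_I" "Q \<in> polyfuns invariants_I"
    and h1: "\<forall>x\<in>U. Q x \<noteq> 0 \<and> f x = P x / Q x" unfolding RI_def by blast
  obtain P' Q' where PQ2: "P' \<in> polyfuns invariants_I" "Q' \<in> polyfuns invariants_I"
    and h2: "\<forall>x\<in>U. Q' x \<noteq> 0 \<and> g x = P' x / Q' x" using \<open>RI U g\<close> unfolding RI_def by blast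
  note PQ = PQ1 PQ2
  have A: "(\<lambda>x. P x * P' x) \<in> polyfuns invariants_I"
    using PQ by (intro polyfuns.add polyfuns.mult)
  have B: "(\<lambda>x. Q x * Q' x) \<in> polyfuns invariants_I"
    using PQ by (intro polyfuns.mult)
  have C: "\<forall>x\<in>U. Q x * Q' x \<noteq> 0 \<and> f x * g x = (P x * P' x) / (Q x * Q' x)"
    using h1 h2 by auto
  show ?thesis unfolding RI_def
    apply (rule bexI[OF _ A]) apply (rule bexI[OF _ B]) using C by blast
qed

lemma RI_inverse: "RI U f \<Longrightarrow> (\<And>x. x \<in> U \<Longrightarrow> f x \<noteq> 0) \<Longrightarrow> RI U (\<lambda>x. 1 / f x)"
proof -
  assume "RI U f" and nz: "\<And>x. x \<in> U \<Longrightarrow> f x \<noteq> 0"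
  then obtain P Q where PQ: "P \<in> polyfuns invariants_I" "Q \<in> polyfuns invariants_I"
    "\<forall>x\<in>U. Q x \<noteq> 0 \<and> f x = P x / Q x"
    unfolding RI_def by metis
  show ?thesis unfolding RI_def
    apply (rule bexI[of _ Q], rule bexI[of _ P])
    using PQ nz by auto
qed

lemma RI_sum: "finite S \<Longrightarrow> (\<And>i. i \<in> S \<Longrightarrow> RI U (f i)) \<Longrightarrow> RI U (\<lambda>x. \<Sum>i\<in>S. f i x)"
proof (induction S rule: finite_induct)
  case empty then show ?case by (simp add: RI_const)
next
  case (insert a S)
  then show ?case using RI_add[of U "f a" "\<lambda>x. \<Sum>i\<in>S. f i x"] by simp
qed

lemma RI_prod: "finite S \<Longrightarrow> (\<And>i. i \<in> S \<Longrightarrow> RI U (f i)) \<Longrightarrow> RI U (\<lambda>x. \<Prod>i\<in>S. f i x)"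
proof (induction S rule: finite_induct)
  case empty then show ?case by (simp add: RI_const)
next
  case (insert a S)
  then show ?case using RI_mult[of U "f a" "\<lambda>x. \<Prod>i\<in>S. f i x"] by simp
qed

lemma RI_diff: "RI U f \<Longrightarrow> RI U g \<Longrightarrow> RI U (\<lambda>x. f x - g x)"
proof -
  assume "RI U f" "RI U g"
  then have "RI U (\<lambda>x. f x + (-1) * g x)" by (intro RI_add RI_mult RI_const)
  thus ?thesis by simp
qed

lemma RI_divide: "RI U f \<Longrightarrow> RI U g \<Longrightarrow> (\<And>x. x \<in> U \<Longrightarrow> g x \<noteq> 0) \<Longrightarrow> RI U (\<lambda>x. f x / g x)"
proof -
  assume "RI U f" "RI U g" "\<And>x. x \<in> U \<Longrightarrow> g x \<noteq> 0"
  then have "RI U (\<lambda>x. f x * (1 / g x))" by (intro RI_mult RI_inverse)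
  thus ?thesis by simp
qed

section \<open>Vectors that are combinations of Krylov vectors with RI coefficients\<close>

definition good :: "('a::field, 'n::finite) pt set \<Rightarrow> (('a, 'n) pt \<Rightarrow> 'a ^ 'n) \<Rightarrow> bool" where
  "good U z \<longleftrightarrow> (\<exists>r. (\<forall>j. RI U (r j)) \<and> (\<forall>x\<in>U. z x = (\<Sum>j<CARD('n). r j x *s wv x j)))"

lemma good_mono: "good U z \<Longrightarrow> V \<subseteq> U \<Longrightarrow> good V z"
  unfolding good_def using RI_mono by blast

lemma good_w:
  fixes U :: "('a::field, 'n::finite) pt set"
  assumes "j < CARD('n)"
  shows "good U (\<lambda>x. wv x j)"
proof -
  have "(\<Sum>i<CARD('n). (if i = j then 1 else 0) *s wv x i) = wv x j" for x :: "('a, 'n) pt"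
    using assms by (simp add: if_distrib[of "\<lambda>c. c *s _"] sum.delta cong: if_cong)
  then show ?thesis unfolding good_def
    by (intro exI[of _ "\<lambda>i x. if i = j then 1 else 0"]) (auto simp: RI_const)
qed

lemma good_add:
  fixes U :: "('a::field, 'n::finite) pt set"
  assumes "good U a" "good U b"
  shows "good U (\<lambda>x. a x + b x)"
proof -
  obtain r where r: "\<forall>j. RI U (r j)" "\<forall>x\<in>U. a x = (\<Sum>j<CARD('n). r j x *s wv x j)"
    using assms(1) unfolding good_def by blast
  obtain r' where r': "\<forall>j. RI U (r' j)" "\<forall>x\<in>U. b x = (\<Sum>j<CARD('n). r' j x *s wv x j)"
    using assms(2) unfolding good_def by blast
  have "\<forall>x\<in>U. a x + b x = (\<Sum>j<CARD('n). (r j x + r' j x) *s wv x j)"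
    using r r' by (simp add: vector_sadd_rdistrib sum.distrib)
  moreover have "\<forall>j. RI U (\<lambda>x. r j x + r' j x)" using r r' by (simp add: RI_add)
  ultimately show ?thesis unfolding good_def by (intro exI[of _ "\<lambda>j x. r j x + r' j x"]) simp
qed

lemma good_scale:
  fixes U :: "('a::field, 'n::finite) pt set"
  assumes c: "RI U c" and a: "good U a"
  shows "good U (\<lambda>x. c x *s a x)"
proof -
  obtain r where r: "\<forall>j. RI U (r j)" "\<forall>x\<in>U. a x = (\<Sum>j<CARD('n). r j x *s wv x j)"
    using a unfolding good_def by blast
  have "\<forall>x\<in>U. c x *s a x = (\<Sum>j<CARD('n). (c x * r j x) *s wv x j)"
    using r by (simp add: vec.scale_sum_right)
  moreover have "\<forall>j. RI U (\<lambda>x. c x * r j x)" using r c by (simp add: RI_mult)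
  ultimately show ?thesis unfolding good_def by (intro exI[of _ "\<lambda>j x. c x * r j x"]) simp
qed

lemma good_diff:
  fixes U :: "('a::field, 'n::finite) pt set"
  shows "good U a \<Longrightarrow> good U b \<Longrightarrow> good U (\<lambda>x. a x - b x)"
proof -
  assume "good U a" "good U b"
  then have "good U (\<lambda>x. a x + (-1) *s b x)" by (intro good_add good_scale RI_const)
  thus ?thesis by (simp add: vector_sneg_minus1[symmetric])
qed

lemma good_zero:
  fixes U :: "('a::field, 'n::finite) pt set"
  shows "good U (\<lambda>x. 0)"
  unfolding good_def by (rule exI[of _ "\<lambda>j x. 0"]) (auto simp: RI_const)

lemma good_sum:
  fixes U :: "('a::field, 'n::finite) pt set"
  shows "finite S \<Longrightarrow> (\<And>i. i \<in> S \<Longrightarrow> good U (f i)) \<Longrightarrow> good U (\<lambda>x. \<Sum>i\<in>S. f i x)"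
proof (induction S rule: finite_induct)
  case empty then show ?case by (simp add: good_zero)
next
  case (insert a S)
  then show ?case using good_add[of U "f a" "\<lambda>x. \<Sum>i\<in>S. f i x"] by simp
qed

lemma mat_vec_scale: "M *v (c *s w) = c *s (M *v (w::'a::field^'n::finite))"
  by (simp add: vec_eq_iff matrix_vector_mult_def sum_distrib_left mult.left_commute)

lemma mat_vec_sum: "(M::'a::field^'n::finite^'m::finite) *v (\<Sum>j\<in>S. c j *s w j) = (\<Sum>j\<in>S. c j *s (M *v w j))"
  by (induction S rule: infinite_finite_induct)
     (auto simp: matrix_vector_right_distrib mat_vec_scale)

lemma good_bil:
  fixes U :: "('a::field_char_0, 'n::finite) pt set"
  assumes U: "U \<subseteq> skew_pts" and a: "good U a" and b: "good U b"
  shows "RI U (\<lambda>x. bil (a x) (b x))"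
proof -
  obtain r where r: "\<forall>j. RI U (r j)" "\<forall>x\<in>U. a x = (\<Sum>j<CARD('n). r j x *s wv x j)"
    using a unfolding good_def by blast
  obtain r' where r': "\<forall>j. RI U (r' j)" "\<forall>x\<in>U. b x = (\<Sum>j<CARD('n). r' j x *s wv x j)"
    using b unfolding good_def by blast
  have g: "RI U (gramI i j)" if "i < CARD('n)" "j < CARD('n)" for i j
    using that by (intro RI_I gramI_I) auto
  have "RI U (\<lambda>x. \<Sum>i<CARD('n). \<Sum>j<CARD('n). r i x * (r' j x * gramI i j x))"
    by (intro RI_sum RI_mult) (auto simp: r r' g)
  then show ?thesis
  proof (rule RI_cong)
    fix x assume x: "x \<in> U"
    have xs: "x \<in> skew_pts" using x U by auto
    have "bil (a x) (b x) = bil (\<Sum>i<CARD('n). r i x *s wv x i) (\<Sum>j<CARD('n). r' j x *s wv x j)"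
      using x r r' by simp
    also have "\<dots> = (\<Sum>i<CARD('n). \<Sum>j<CARD('n). r i x * (r' j x * bil (wv x i) (wv x j)))"
      by (simp only: bil_sum_left bil_scale_left bil_sum_right bil_scale_right sum_distrib_left, subst sum.swap, simp add: mult_ac)
    finally show "(\<Sum>i<CARD('n). \<Sum>j<CARD('n). r i x * (r' j x * gramI i j x)) = bil (a x) (b x)"
      by (simp add: gram_formula[OF xs])
  qed
qed

lemma good_bilM:
  fixes U :: "('a::field_char_0, 'n::finite) pt set"
  assumes U: "U \<subseteq> skew_pts" and a: "good U a" and b: "good U b"
  shows "RI U (\<lambda>x. bil (a x) (snd x *v b x))"
proof -
  obtain r where r: "\<forall>j. RI U (r j)" "\<forall>x\<in>U. a x = (\<Sum>j<CARD('n). r j x *s wv x j)"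
    using a unfolding good_def by blast
  obtain r' where r': "\<forall>j. RI U (r' j)" "\<forall>x\<in>U. b x = (\<Sum>j<CARD('n). r' j x *s wv x j)"
    using b unfolding good_def by blast
  have g: "RI U (gramI i (Suc j))" if "i < CARD('n)" "j < CARD('n)" for i j
    using that by (intro RI_I gramI_I) auto
  have "RI U (\<lambda>x. \<Sum>i<CARD('n). \<Sum>j<CARD('n). r i x * (r' j x * gramI i (Suc j) x))"
    by (intro RI_sum RI_mult) (auto simp: r r' g)
  then show ?thesis
  proof (rule RI_cong)
    fix x assume x: "x \<in> U"
    have xs: "x \<in> skew_pts" using x U by auto
    have "bil (a x) (snd x *v b x) = bil (\<Sum>i<CARD('n). r i x *s wv x i) (\<Sum>j<CARD('n). r' j x *s wv x (Suc j))"
      using x r r' by (simp add: mat_vec_sum wv_Suc)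
    also have "\<dots> = (\<Sum>i<CARD('n). \<Sum>j<CARD('n). r i x * (r' j x * bil (wv x i) (wv x (Suc j))))"
      by (simp only: bil_sum_left bil_scale_left bil_sum_right bil_scale_right sum_distrib_left, subst sum.swap, simp add: mult_ac)
    finally show "(\<Sum>i<CARD('n). \<Sum>j<CARD('n). r i x * (r' j x * gramI i (Suc j) x)) = bil (a x) (snd x *v b x)"
      by (simp add: gram_formula[OF xs])
  qed
qed

section \<open>Level sets\<close>

definition Ulev :: "nat \<Rightarrow> ('a::field, 'n::finite) pt set" where
  "Ulev k = {x \<in> skew_pts. \<forall>l<k. Dv x l \<noteq> 0}"

lemma Ulev_skew: "Ulev k \<subseteq> skew_pts" unfolding Ulev_def by auto

lemma Ulev_mono: "k \<le> k' \<Longrightarrow> Ulev k' \<subseteq> Ulev k" unfolding Ulev_def by auto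

lemma level:
  "k \<le> CARD('n) \<Longrightarrow> (\<exists>G\<in>polyfuns invariants_I. (Ulev k :: ('a::field_char_0, 'n::finite) pt set) = {x\<in>skew_pts. G x \<noteq> 0})
     \<and> (\<forall>l<CARD('n). l \<le> k \<longrightarrow> good (Ulev k :: ('a, 'n) pt set) (\<lambda>x. yv x l))"
proof (induction k)
  case 0
  have "Ulev 0 = {x\<in>skew_pts. (\<lambda>_. (1::'a)) x \<noteq> 0}" by (simp add: Ulev_def)
  moreover have "good (Ulev 0 :: ('a, 'n) pt set) (\<lambda>x. yv x 0)"
    using good_w[of 0] by (simp add: yv_eq[of _ 0])
  moreover have "\<exists>G\<in>polyfuns invariants_I. (Ulev 0 :: ('a, 'n) pt set) = {x\<in>skew_pts. G x \<noteq> 0}"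
    by (rule bexI[of _ "\<lambda>_. 1"]) (auto simp: Ulev_def intro: polyfuns.const)
  ultimately show ?case by auto
next
  case (Suc k)
  then have k: "k < CARD('n)" by simp
  from Suc obtain G where G: "G \<in> polyfuns invariants_I" "(Ulev k :: ('a, 'n) pt set) = {x\<in>skew_pts. G x \<noteq> 0}"
    and gd: "\<forall>l<CARD('n). l \<le> k \<longrightarrow> good (Ulev k :: ('a, 'n) pt set) (\<lambda>x. yv x l)" by auto
  have "RI (Ulev k :: ('a, 'n) pt set) (\<lambda>x. Dv x k)"
    unfolding Dv_def using gd k by (intro good_bil Ulev_skew) auto
  then obtain P Q where PQ: "P \<in> polyfuns invariants_I" "Q \<in> polyfuns invariants_I"
    "\<forall>x\<in>(Ulev k :: ('a, 'n) pt set). Q x \<noteq> 0 \<and> Dv x k = P x / Q x" unfolding RI_def by blast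
  have U1: "(Ulev (Suc k) :: ('a, 'n) pt set) = {x \<in> Ulev k. Dv x k \<noteq> 0}"
    unfolding Ulev_def using less_Suc_eq by auto
  have U2: "(Ulev (Suc k) :: ('a, 'n) pt set) = {x\<in>skew_pts. G x * P x \<noteq> 0}"
    unfolding U1 using PQ(3) G(2) by auto
  have GP: "(\<lambda>x. G x * P x) \<in> polyfuns invariants_I" using G(1) PQ(1) by (rule polyfuns.mult)
  have E: "\<exists>G\<in>polyfuns invariants_I. (Ulev (Suc k) :: ('a, 'n) pt set) = {x\<in>skew_pts. G x \<noteq> 0}"
    using U2 GP by (intro bexI[of _ "\<lambda>x. G x * P x"])
  have "good (Ulev (Suc k) :: ('a, 'n) pt set) (\<lambda>x. yv x l)" if l: "l < CARD('n)" "l \<le> Suc k" for l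
  proof (cases "l \<le> k")
    case True
    then show ?thesis using gd l good_mono Ulev_mono[of k "Suc k"] by auto
  next
    case False
    then have l': "l = Suc k" using l by simp
    have "good (Ulev (Suc k) :: ('a, 'n) pt set)
       (\<lambda>x. wv x l - (\<Sum>j<l. ((bil (wv x l) (yv x j)) * (1 / Dv x j)) *s yv x j))"
    proof (intro good_diff good_w l good_sum good_scale RI_mult RI_inverse)
      fix j assume j: "j \<in> {..<l}"
      have gk: "good (Ulev k :: ('a, 'n) pt set) (\<lambda>x. yv x j)"
        using gd j l' l by auto
      have gj: "good (Ulev (Suc k) :: ('a, 'n) pt set) (\<lambda>x. yv x j)"
        using good_mono[OF gk Ulev_mono[of k "Suc k"]] by simp
      show "good (Ulev (Suc k) :: ('a, 'n) pt set) (\<lambda>x. yv x j)" by (rule gj)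
      show "RI (Ulev (Suc k) :: ('a, 'n) pt set) (\<lambda>x. bil (wv x l) (yv x j))"
        by (intro good_bil Ulev_skew good_w l gj)
      show "RI (Ulev (Suc k) :: ('a, 'n) pt set) (\<lambda>x. Dv x j)"
        unfolding Dv_def by (intro good_bil Ulev_skew gj)
      show "\<And>x. x \<in> (Ulev (Suc k) :: ('a, 'n) pt set) \<Longrightarrow> Dv x j \<noteq> 0"
        using j l' unfolding Ulev_def by auto
    qed simp
    then show ?thesis using l' by (simp add: yv_eq[of _ "Suc k"] divide_inverse)
  qed
  then show ?case using E by blast
qed

definition idx :: "'n::finite \<Rightarrow> nat" where
  "idx = (SOME h. bij_betw h (UNIV::'n set) {0..<CARD('n)})"

lemma idx_bij: "bij_betw (idx::'n::finite \<Rightarrow> nat) UNIV {0..<CARD('n)}"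
proof -
  obtain h where "bij_betw h (UNIV::'n set) {0..<CARD('n)}"
    using ex_bij_betw_finite_nat[of "UNIV::'n set"] by auto
  then show ?thesis unfolding idx_def by (rule someI[where P="\<lambda>h. bij_betw h (UNIV::'n set) {0..<CARD('n)}"])
qed

lemma idx_lt: "idx (i::'n::finite) < CARD('n)"
  using idx_bij[where 'n='n] unfolding bij_betw_def by auto

lemma idx_inj: "idx (i::'n::finite) = idx j \<Longrightarrow> i = j"
  using idx_bij[where 'n='n] unfolding bij_betw_def inj_on_def by auto


definition Ufin :: "('a::field, 'n::finite) pt set" where
  "Ufin = Ulev CARD('n)"

lemma Ufin_skew: "x \<in> Ufin \<Longrightarrow> x \<in> skew_pts"
  unfolding Ufin_def Ulev_def by auto

lemma Ufin_D: "(x :: ('a::field, 'n::finite) pt) \<in> Ufin \<Longrightarrow> l < CARD('n) \<Longrightarrow> Dv x l \<noteq> 0"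
  unfolding Ufin_def Ulev_def by auto

lemma Ufin_G: "\<exists>G\<in>polyfuns invariants_I. (Ufin :: ('a::field_char_0, 'n::finite) pt set) = {x\<in>skew_pts. G x \<noteq> 0}"
  using level[of "CARD('n)", where 'a='a] unfolding Ufin_def by auto

lemma good_y: "l < CARD('n) \<Longrightarrow> good (Ufin :: ('a::field_char_0, 'n::finite) pt set) (\<lambda>x. yv x l)"
  using level[of "CARD('n)", where 'a='a and 'n='n] unfolding Ufin_def by auto

definition Yv :: "('a::field, 'n::finite) pt \<Rightarrow> 'n \<Rightarrow> 'a ^ 'n" where
  "Yv x i = yv x (idx i)"

definition DD :: "('a::field, 'n::finite) pt \<Rightarrow> 'n \<Rightarrow> 'a" where
  "DD x i = Dv x (idx i)"

lemma DD_nz: "x \<in> Ufin \<Longrightarrow> DD x i \<noteq> 0"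
  unfolding DD_def using Ufin_D idx_lt by blast

lemma good_Y: "good (Ufin :: ('a::field_char_0, 'n::finite) pt set) (\<lambda>x. Yv x i)"
  unfolding Yv_def using good_y idx_lt by blast

lemma good_v: "good (Ufin :: ('a::field_char_0, 'n::finite) pt set) (\<lambda>x. fst x)"
  using good_w[of 0, where 'a='a and 'n='n] by (simp add: wv_0)

lemma Ufin_sub: "(Ufin :: ('a::field, 'n::finite) pt set) \<subseteq> skew_pts"
  using Ufin_skew by blast

lemma RI_DD: "RI (Ufin :: ('a::field_char_0, 'n::finite) pt set) (\<lambda>x. DD x i)"
  unfolding DD_def Dv_def using good_bil[OF Ufin_sub good_Y[of i] good_Y[of i]] unfolding Yv_def by simp

lemma Y_orth:
  assumes "(x :: ('a::field, 'n::finite) pt) \<in> Ufin" "i \<noteq> j"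
  shows "bil (Yv x i) (Yv x j) = 0"
  unfolding Yv_def
  by (rule yv_orth[of "CARD('n)"]) (use assms idx_lt[where 'n='n] idx_inj[where 'n='n] Ufin_D[OF assms(1)] in auto)

definition sq :: "('a::field, 'n::finite) pt \<Rightarrow> ('n \<Rightarrow> 'a) \<Rightarrow> bool" where
  "sq x e \<longleftrightarrow> (\<forall>i. e i ^ 2 = DD x i)"

lemma sq_nz: "x \<in> Ufin \<Longrightarrow> sq x e \<Longrightarrow> e i \<noteq> 0"
  unfolding sq_def using DD_nz by (metis power_zero_numeral)

definition Amat :: "('a::field, 'n::finite) pt \<Rightarrow> ('n \<Rightarrow> 'a) \<Rightarrow> 'a ^ 'n ^ 'n" where
  "Amat x e = (\<chi> i r. Yv x i $ r / e i)"

lemma Amat_orth: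
  assumes x: "(x :: ('a::field, 'n::finite) pt) \<in> Ufin" and e: "sq x e"
  shows "Amat x e \<in> orth_group"
proof -
  have "(Amat x e ** transpose (Amat x e)) $ i $ j = mat 1 $ i $ j" for i j
  proof -
    have "(Amat x e ** transpose (Amat x e)) $ i $ j = bil (Yv x i) (Yv x j) / (e i * e j)"
      unfolding Amat_def matrix_matrix_mult_def transpose_def bil_def
      by (simp add: sum_divide_distrib)
    also have "\<dots> = mat 1 $ i $ j"
    proof (cases "i = j")
      case True
      have "e i ^ 2 = DD x i" using e unfolding sq_def by auto
      then show ?thesis using True sq_nz[OF x e, of i] DD_nz[OF x, of i]
        unfolding DD_def Dv_def Yv_def mat_def by (simp add: power2_eq_square)
    next
      case False
      then show ?thesis using Y_orth[OF x False] unfolding mat_def by simp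
    qed
    finally show ?thesis .
  qed
  then show ?thesis unfolding orth_group_def by (simp add: vec_eq_iff)
qed

definition cv :: "('a::field, 'n::finite) pt \<Rightarrow> 'n \<Rightarrow> 'a" where
  "cv x i = bil (Yv x i) (fst x) / DD x i"

definition cM :: "('a::field, 'n::finite) pt \<Rightarrow> 'n \<Rightarrow> 'n \<Rightarrow> 'a" where
  "cM x i j = bil (Yv x i) (snd x *v Yv x j) / (DD x i * DD x j)"

definition slice :: "('a::field, 'n::finite) pt \<Rightarrow> ('n \<Rightarrow> 'a) \<Rightarrow> ('a, 'n) pt" where
  "slice x e = ((\<chi> i. cv x i * e i), (\<chi> i j. cM x i j * (e i * e j)))"

lemma inv_sq: "x \<in> Ufin \<Longrightarrow> sq x e \<Longrightarrow> 1 / e i = e i / DD x i"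
proof -
  assume x: "x \<in> Ufin" and e: "sq x e"
  have "DD x i = e i ^ 2" using e unfolding sq_def by auto
  then show ?thesis using sq_nz[OF x e, of i] by (simp add: power2_eq_square)
qed

lemma act_Amat:
  assumes x: "(x :: ('a::field, 'n::finite) pt) \<in> Ufin" and e: "sq x e"
  shows "act (Amat x e) x = slice x e"
proof -
  have 1: "(Amat x e *v fst x) $ i = cv x i * e i" for i
  proof -
    have "(Amat x e *v fst x) $ i = bil (Yv x i) (fst x) * (1 / e i)"
      unfolding Amat_def matrix_vector_mult_def bil_def by (simp add: sum_divide_distrib)
    then show ?thesis using inv_sq[OF x e, of i] unfolding cv_def by simp
  qed
  have 2: "(Amat x e ** snd x ** transpose (Amat x e)) $ i $ j = cM x i j * (e i * e j)" for i j
  proof -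
    have a: "(\<Sum>r\<in>UNIV. (Yv x i $ r / e i) * snd x $ r $ k) = (\<Sum>r\<in>UNIV. Yv x i $ r * snd x $ r $ k) / e i" for k
      by (simp add: sum_divide_distrib)
    have "(Amat x e ** snd x ** transpose (Amat x e)) $ i $ j
        = (\<Sum>k\<in>UNIV. ((\<Sum>r\<in>UNIV. Yv x i $ r * snd x $ r $ k) / e i) * (Yv x j $ k / e j))"
      unfolding Amat_def matrix_matrix_mult_def transpose_def by (simp only: vec_lambda_beta a)
    also have "\<dots> = (\<Sum>k\<in>UNIV. (\<Sum>r\<in>UNIV. Yv x i $ r * snd x $ r $ k) * Yv x j $ k) * ((1 / e i) * (1 / e j))"
      by (simp add: sum_distrib_right sum_divide_distrib)
    also have "(\<Sum>k\<in>UNIV. (\<Sum>r\<in>UNIV. Yv x i $ r * snd x $ r $ k) * Yv x j $ k) = bil (Yv x i) (snd x *v Yv x j)"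
      unfolding bil_def matrix_vector_mult_def
      by (simp add: sum_distrib_right sum_distrib_left mult_ac) (rule sum.swap)
    finally show ?thesis using inv_sq[OF x e, of i] inv_sq[OF x e, of j] unfolding cM_def
      by (simp add: field_simps)
  qed
  show ?thesis unfolding act_def slice_def using 1 2 by (simp add: vec_eq_iff)
qed

lemma RI_cv: "RI (Ufin :: ('a::field_char_0, 'n::finite) pt set) (\<lambda>x. cv x i)"
  unfolding cv_def
  by (intro RI_divide good_bil[OF Ufin_sub] good_Y good_v RI_DD DD_nz)

lemma RI_cM: "RI (Ufin :: ('a::field_char_0, 'n::finite) pt set) (\<lambda>x. cM x i j)"
  unfolding cM_def
  by (intro RI_divide good_bilM[OF Ufin_sub] good_Y RI_mult RI_DD) (simp add: DD_nz)

lemma RI_eq: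
  assumes "RI U h" "x \<in> U" "y \<in> U" "\<forall>f\<in>invariants_I. f x = f y"
  shows "h x = h y"
proof -
  obtain P Q where PQ: "P \<in> polyfuns invariants_I" "Q \<in> polyfuns invariants_I"
    "\<forall>x\<in>U. Q x \<noteq> 0 \<and> h x = P x / Q x" using assms(1) unfolding RI_def by blast
  have "P x = P y" "Q x = Q y" using polyfuns_eqI[of invariants_I x y] PQ assms(4) by auto
  then show ?thesis using PQ assms by auto
qed

definition sdiff :: "'n set \<Rightarrow> 'n set \<Rightarrow> 'n set" where
  "sdiff S T = (S - T) \<union> (T - S)"

lemma sdiff_inv: "sdiff S (sdiff S R) = R"
  unfolding sdiff_def by auto

lemma prod_sdiff:
  fixes e :: "'n::finite \<Rightarrow> 'a::field"
  shows "(\<Prod>i\<in>S. e i) * (\<Prod>i\<in>T. e i) = (\<Prod>i\<in>sdiff S T. e i) * (\<Prod>i\<in>S \<inter> T. e i * e i)"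
proof -
  have 1: "(\<Prod>i\<in>S. e i) = (\<Prod>i\<in>S \<inter> T. e i) * (\<Prod>i\<in>S - T. e i)" by (rule prod.Int_Diff) simp
  have 2: "(\<Prod>i\<in>T. e i) = (\<Prod>i\<in>S \<inter> T. e i) * (\<Prod>i\<in>T - S. e i)"
    by (subst prod.Int_Diff[of _ _ S]) (simp_all add: Int_commute)
  have 3: "(\<Prod>i\<in>sdiff S T. e i) = (\<Prod>i\<in>S - T. e i) * (\<Prod>i\<in>T - S. e i)"
    unfolding sdiff_def by (rule prod.union_disjoint) auto
  show ?thesis unfolding 1 2 3 prod.distrib by (simp add: mult_ac)
qed

definition MLf :: "(('a::field, 'n::finite) pt \<Rightarrow> ('n \<Rightarrow> 'a) \<Rightarrow> 'a) \<Rightarrow> bool" where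
  "MLf F \<longleftrightarrow> (\<exists>r. (\<forall>S. RI Ufin (r S)) \<and>
      (\<forall>x\<in>Ufin. \<forall>e. sq x e \<longrightarrow> F x e = (\<Sum>S\<in>UNIV. r S x * (\<Prod>i\<in>S. e i))))"

lemma MLf_RI:
  fixes h :: "('a::field, 'n::finite) pt \<Rightarrow> 'a"
  assumes "RI Ufin h"
  shows "MLf (\<lambda>x e. h x)"
proof -
  have "(\<Sum>S\<in>UNIV. (if S = {} then h x else 0) * (\<Prod>i\<in>S. e i)) = h x" for x and e :: "'n \<Rightarrow> 'a"
    by (simp add: if_distrib[of "\<lambda>c. c * _"] cong: if_cong)
  moreover have "\<forall>S :: 'n set. RI Ufin (\<lambda>x. if S = {} then h x else 0)"
  proof
    fix S :: "'n set"
    show "RI (Ufin :: ('a, 'n) pt set) (\<lambda>x. if S = {} then h x else 0)"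
      by (cases "S = {}") (simp_all add: assms RI_const)
  qed
  ultimately show ?thesis unfolding MLf_def
    by (intro exI[of _ "\<lambda>S x. if S = {} then h x else 0"]) auto
qed

lemma MLf_eta:
  shows "MLf (\<lambda>(x :: ('a::field, 'n::finite) pt) e. e i)"
proof -
  have "(\<Sum>S\<in>UNIV. (if S = {i} then 1 else 0) * (\<Prod>i\<in>S. e i)) = e i" for e :: "'n \<Rightarrow> 'a"
    by (simp add: if_distrib[of "\<lambda>c. c * _"] cong: if_cong)
  moreover have "\<forall>S. RI (Ufin :: ('a, 'n) pt set) (\<lambda>x. if S = {i} then 1 else 0)"
    by (auto simp: RI_const)
  ultimately show ?thesis unfolding MLf_def
    by (intro exI[of _ "\<lambda>S x. if S = {i} then 1 else 0"]) auto
qed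

lemma MLf_add:
  fixes F G :: "('a::field, 'n::finite) pt \<Rightarrow> ('n \<Rightarrow> 'a) \<Rightarrow> 'a"
  assumes "MLf F" "MLf G"
  shows "MLf (\<lambda>x e. F x e + G x e)"
proof -
  obtain r where r: "\<forall>S. RI Ufin (r S)" "\<forall>x\<in>Ufin. \<forall>e. sq x e \<longrightarrow> F x e = (\<Sum>S\<in>UNIV. r S x * (\<Prod>i\<in>S. e i))"
    using assms(1) unfolding MLf_def by blast
  obtain r' where r': "\<forall>S. RI Ufin (r' S)" "\<forall>x\<in>Ufin. \<forall>e. sq x e \<longrightarrow> G x e = (\<Sum>S\<in>UNIV. r' S x * (\<Prod>i\<in>S. e i))"
    using assms(2) unfolding MLf_def by blast
  have "\<forall>x\<in>Ufin. \<forall>e. sq x e \<longrightarrow> F x e + G x e = (\<Sum>S\<in>UNIV. (r S x + r' S x) * (\<Prod>i\<in>S. e i))"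
    using r r' by (simp add: distrib_right sum.distrib)
  moreover have "\<forall>S. RI Ufin (\<lambda>x. r S x + r' S x)" using r r' by (simp add: RI_add)
  ultimately show ?thesis unfolding MLf_def by (intro exI[of _ "\<lambda>S x. r S x + r' S x"]) simp
qed

lemma MLf_mult:
  fixes F G :: "('a::field_char_0, 'n::finite) pt \<Rightarrow> ('n \<Rightarrow> 'a) \<Rightarrow> 'a"
  assumes "MLf F" "MLf G"
  shows "MLf (\<lambda>x e. F x e * G x e)"
proof -
  obtain r where r: "\<forall>S. RI Ufin (r S)" "\<forall>x\<in>Ufin. \<forall>e. sq x e \<longrightarrow> F x e = (\<Sum>S\<in>UNIV. r S x * (\<Prod>i\<in>S. e i))"
    using assms(1) unfolding MLf_def by blast
  obtain r' where r': "\<forall>S. RI Ufin (r' S)" "\<forall>x\<in>Ufin. \<forall>e. sq x e \<longrightarrow> G x e = (\<Sum>S\<in>UNIV. r' S x * (\<Prod>i\<in>S. e i))"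
    using assms(2) unfolding MLf_def by blast
  define \<rho> where "\<rho> R x = (\<Sum>S\<in>UNIV. r S x * r' (sdiff S R) x * (\<Prod>i\<in>S \<inter> sdiff S R. DD x i))" for R x
  have "\<forall>R. RI Ufin (\<rho> R)"
    unfolding \<rho>_def using r(1) r'(1) by (intro allI RI_sum RI_mult RI_prod RI_DD) auto
  moreover have "F x e * G x e = (\<Sum>R\<in>UNIV. \<rho> R x * (\<Prod>i\<in>R. e i))" if x: "x \<in> Ufin" and e: "sq x e" for x e
  proof -
    have ee: "e i * e i = DD x i" for i using e unfolding sq_def by (simp add: power2_eq_square)
    have "F x e * G x e = (\<Sum>S\<in>UNIV. r S x * (\<Prod>i\<in>S. e i)) * (\<Sum>T\<in>UNIV. r' T x * (\<Prod>i\<in>T. e i))"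
      using r r' x e by simp
    also have "\<dots> = (\<Sum>S\<in>UNIV. \<Sum>T\<in>UNIV. r S x * r' T x * ((\<Prod>i\<in>S. e i) * (\<Prod>i\<in>T. e i)))"
      by (subst sum_product) (simp add: mult_ac)
    also have "\<dots> = (\<Sum>S\<in>UNIV. \<Sum>T\<in>UNIV. r S x * r' T x * ((\<Prod>i\<in>sdiff S T. e i) * (\<Prod>i\<in>S \<inter> T. DD x i)))"
      by (simp add: prod_sdiff ee)
    also have "\<dots> = (\<Sum>S\<in>UNIV. \<Sum>R\<in>UNIV. r S x * r' (sdiff S R) x * ((\<Prod>i\<in>R. e i) * (\<Prod>i\<in>S \<inter> sdiff S R. DD x i)))"
    proof (rule sum.cong[OF refl])
      fix S
      show "(\<Sum>T\<in>UNIV. r S x * r' T x * ((\<Prod>i\<in>sdiff S T. e i) * (\<Prod>i\<in>S \<inter> T. DD x i)))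
          = (\<Sum>R\<in>UNIV. r S x * r' (sdiff S R) x * ((\<Prod>i\<in>R. e i) * (\<Prod>i\<in>S \<inter> sdiff S R. DD x i)))"
        by (rule sum.reindex_bij_witness[of _ "sdiff S" "sdiff S"]) (auto simp: sdiff_inv)
    qed
    also have "\<dots> = (\<Sum>R\<in>UNIV. \<Sum>S\<in>UNIV. r S x * r' (sdiff S R) x * ((\<Prod>i\<in>R. e i) * (\<Prod>i\<in>S \<inter> sdiff S R. DD x i)))"
      by (rule sum.swap)
    also have "\<dots> = (\<Sum>R\<in>UNIV. \<rho> R x * (\<Prod>i\<in>R. e i))"
      unfolding \<rho>_def by (simp add: sum_distrib_left sum_distrib_right mult_ac)
    finally show ?thesis .
  qed
  ultimately show ?thesis unfolding MLf_def by (intro exI[of _ \<rho>]) auto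
qed

lemma MLf_sum:
  fixes F :: "'b \<Rightarrow> ('a::field_char_0, 'n::finite) pt \<Rightarrow> ('n \<Rightarrow> 'a) \<Rightarrow> 'a"
  shows "finite A \<Longrightarrow> (\<And>k. k \<in> A \<Longrightarrow> MLf (F k)) \<Longrightarrow> MLf (\<lambda>x e. \<Sum>k\<in>A. F k x e)"
proof (induction A rule: finite_induct)
  case empty
  then show ?case using MLf_RI[OF RI_const[of _ 0]] by simp
next
  case (insert a A)
  then show ?case using MLf_add[of "F a" "\<lambda>x e. \<Sum>k\<in>A. F k x e"] by simp
qed

lemma MLf_poly:
  fixes \<Phi> :: "('a::field_char_0, 'n::finite) pt \<Rightarrow> ('n \<Rightarrow> 'a) \<Rightarrow> ('a, 'n) pt"
  assumes g: "g \<in> poly_funs"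
    and v: "\<And>i. MLf (\<lambda>x e. fst (\<Phi> x e) $ i)"
    and M: "\<And>i j. MLf (\<lambda>x e. snd (\<Phi> x e) $ i $ j)"
  shows "MLf (\<lambda>x e. g (\<Phi> x e))"
  using g unfolding poly_funs_def
proof (induction rule: polyfuns.induct)
  case (gen f)
  then show ?case unfolding coord_funs_def using v M by auto
next
  case (const c)
  then show ?case using MLf_RI[OF RI_const[of _ c]] by simp
next
  case (add f g)
  then show ?case using MLf_add by blast
next
  case (mult f g)
  then show ?case using MLf_mult by blast
qed

section \<open>The grid lemma\<close>

lemma grid:
  fixes h :: "'n set \<Rightarrow> 'a::field_char_0"
  assumes "finite I" "\<forall>i\<in>I. c i \<noteq> 0"
    "\<forall>e. (\<forall>i\<in>I. e i = c i \<or> e i = - c i) \<longrightarrow> (\<Sum>S\<in>Pow I. h S * (\<Prod>i\<in>S. e i)) = 0"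
  shows "\<forall>S\<subseteq>I. h S = 0"
  using assms
proof (induction I arbitrary: h rule: finite_induct)
  case empty
  have "(\<Sum>S\<in>Pow {}. h S * (\<Prod>i\<in>S. c i)) = 0" using empty by auto
  then show ?case by simp
next
  case (insert a I)
  have split: "(\<Sum>S\<in>Pow (insert a I). h S * (\<Prod>i\<in>S. e i))
      = (\<Sum>S\<in>Pow I. (h S + e a * h (insert a S)) * (\<Prod>i\<in>S. e i))" for e
  proof -
    have "(\<Sum>S\<in>Pow (insert a I). h S * (\<Prod>i\<in>S. e i))
        = (\<Sum>S\<in>Pow I. h S * (\<Prod>i\<in>S. e i)) + (\<Sum>S\<in>insert a ` Pow I. h S * (\<Prod>i\<in>S. e i))"
      unfolding Pow_insert using insert.hyps by (subst sum.union_disjoint) auto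
    also have "(\<Sum>S\<in>insert a ` Pow I. h S * (\<Prod>i\<in>S. e i)) = (\<Sum>S\<in>Pow I. h (insert a S) * (\<Prod>i\<in>insert a S. e i))"
      using insert.hyps by (subst sum.reindex) (auto simp: inj_on_def)
    also have "\<dots> = (\<Sum>S\<in>Pow I. e a * h (insert a S) * (\<Prod>i\<in>S. e i))"
    proof (intro sum.cong refl)
      fix S assume "S \<in> Pow I"
      then have "finite S" "a \<notin> S" using insert.hyps finite_subset by auto
      then show "h (insert a S) * (\<Prod>i\<in>insert a S. e i) = e a * h (insert a S) * (\<Prod>i\<in>S. e i)"
        by simp
    qed
    finally show ?thesis by (simp add: distrib_right sum.distrib)
  qed
  have IHs: "\<forall>S\<subseteq>I. h S + s * c a * h (insert a S) = 0" if s: "s = 1 \<or> s = -1" for s :: 'a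
  proof (rule insert.IH)
    show "\<forall>i\<in>I. c i \<noteq> 0" using insert.prems by auto
    show "\<forall>e. (\<forall>i\<in>I. e i = c i \<or> e i = - c i) \<longrightarrow> (\<Sum>S\<in>Pow I. (h S + s * c a * h (insert a S)) * (\<Prod>i\<in>S. e i)) = 0"
    proof (intro allI impI)
      fix e assume e: "\<forall>i\<in>I. e i = c i \<or> e i = - c i"
      define e' where "e' = e(a := s * c a)"
      have "\<forall>i\<in>insert a I. e' i = c i \<or> e' i = - c i" using e s unfolding e'_def by auto
      then have "(\<Sum>S\<in>Pow (insert a I). h S * (\<Prod>i\<in>S. e' i)) = 0" using insert.prems by blast
      then have z0: "(\<Sum>S\<in>Pow I. (h S + e' a * h (insert a S)) * (\<Prod>i\<in>S. e' i)) = 0" by (simp add: split)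
      have pe: "(\<Prod>i\<in>S. e' i) = (\<Prod>i\<in>S. e i)" if "S \<in> Pow I" for S
        using that insert.hyps unfolding e'_def by (intro prod.cong) auto
      have ea: "e' a = s * c a" unfolding e'_def by simp
      have "(\<Sum>S\<in>Pow I. (h S + s * c a * h (insert a S)) * (\<Prod>i\<in>S. e i))
          = (\<Sum>S\<in>Pow I. (h S + e' a * h (insert a S)) * (\<Prod>i\<in>S. e' i))"
        using pe ea by (intro sum.cong refl) simp
      then show "(\<Sum>S\<in>Pow I. (h S + s * c a * h (insert a S)) * (\<Prod>i\<in>S. e i)) = 0"
        using z0 by simp
    qed
  qed
  have z: "h S = 0 \<and> h (insert a S) = 0" if "S \<subseteq> I" for S
  proof -
    have 1: "h S + c a * h (insert a S) = 0" using IHs[of 1] that by auto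
    have 2: "h S - c a * h (insert a S) = 0" using IHs[of "-1"] that by auto
    have "2 * (c a * h (insert a S)) = 0" using 1 2 by (simp add: algebra_simps)
    then have "h (insert a S) = 0" using insert.prems by auto
    then show ?thesis using 1 by simp
  qed
  show ?case
  proof (intro allI impI)
    fix S assume S: "S \<subseteq> insert a I"
    show "h S = 0"
    proof (cases "a \<in> S")
      case True
      then have "S = insert a (S - {a})" by auto
      moreover have "S - {a} \<subseteq> I" using S by auto
      ultimately show ?thesis using z by metis
    next
      case False
      then show ?thesis using S z by auto
    qed
  qed
qed

definition lineP :: "('a::field, 'n::finite) pt \<Rightarrow> ('a, 'n) pt \<Rightarrow> 'a \<Rightarrow> ('a, 'n) pt" where
  "lineP x1 x2 t = ((\<chi> i. fst x1 $ i + t * (fst x2 $ i - fst x1 $ i)),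
     (\<chi> i j. snd x1 $ i $ j + t * (snd x2 $ i $ j - snd x1 $ i $ j)))"

lemma poly_line:
  fixes f :: "('a::field, 'n::finite) pt \<Rightarrow> 'a"
  assumes "f \<in> poly_funs"
  shows "\<exists>P. \<forall>t. f (lineP x1 x2 t) = poly P t"
  using assms unfolding poly_funs_def
proof (induction rule: polyfuns.induct)
  case (gen f)
  then consider i where "f = (\<lambda>x. fst x $ i)" | i j where "f = (\<lambda>x. snd x $ i $ j)"
    unfolding coord_funs_def by blast
  then show ?case
  proof cases
    case 1
    show ?thesis
      by (rule exI[of _ "[:fst x1 $ i, fst x2 $ i - fst x1 $ i:]"]) (simp add: 1 lineP_def algebra_simps)
  next
    case 2
    show ?thesis
      by (rule exI[of _ "[:snd x1 $ i $ j, snd x2 $ i $ j - snd x1 $ i $ j:]"]) (simp add: 2 lineP_def algebra_simps)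
  qed
next
  case (const c)
  then show ?case by (intro exI[of _ "[:c:]"]) simp
next
  case (add f g)
  then obtain P Q where "\<forall>t. f (lineP x1 x2 t) = poly P t" "\<forall>t. g (lineP x1 x2 t) = poly Q t" by blast
  then show ?case by (intro exI[of _ "P + Q"]) simp
next
  case (mult f g)
  then obtain P Q where "\<forall>t. f (lineP x1 x2 t) = poly P t" "\<forall>t. g (lineP x1 x2 t) = poly Q t" by blast
  then show ?case by (intro exI[of _ "P * Q"]) simp
qed

lemma skew_iff: "(transpose (M::'a::field^'n::finite^'n) = - M) = (\<forall>i j. M $ j $ i = - (M $ i $ j))"
  by (simp add: vec_eq_iff transpose_def)

lemma lineP_skew: "x1 \<in> skew_pts \<Longrightarrow> x2 \<in> skew_pts \<Longrightarrow> lineP x1 x2 t \<in> skew_pts"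
proof -
  assume a: "x1 \<in> skew_pts" "x2 \<in> skew_pts"
  have t1: "transpose (snd x1) = - snd x1" using a(1) by (rule skewD)
  have t2: "transpose (snd x2) = - snd x2" using a(2) by (rule skewD)
  have s1: "snd x1 $ j $ i = - (snd x1 $ i $ j)" and s2: "snd x2 $ j $ i = - (snd x2 $ i $ j)" for i j
    using t1 t2 unfolding skew_iff by blast+
  have "snd (lineP x1 x2 t) $ j $ i = - (snd (lineP x1 x2 t) $ i $ j)" for i j
    using s1[of i j] s2[of i j] unfolding lineP_def by (simp add: algebra_simps)
  then have "transpose (snd (lineP x1 x2 t)) = - snd (lineP x1 x2 t)" unfolding skew_iff by blast
  then show ?thesis unfolding skew_pts_def by (cases "lineP x1 x2 t") auto
qed

lemma lineP_0: "lineP x1 x2 0 = x1" unfolding lineP_def by (simp add: vec_eq_iff)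
lemma lineP_1: "lineP x1 x2 1 = x2" unfolding lineP_def by (simp add: vec_eq_iff)

lemma two_nonzero:
  fixes f g :: "('a::field_char_0, 'n::finite) pt \<Rightarrow> 'a"
  assumes "f \<in> poly_funs" "g \<in> poly_funs" "x1 \<in> skew_pts" "x2 \<in> skew_pts" "f x1 \<noteq> 0" "g x2 \<noteq> 0"
  shows "\<exists>x\<in>skew_pts. f x \<noteq> 0 \<and> g x \<noteq> 0"
proof -
  obtain P where P: "\<forall>t. f (lineP x1 x2 t) = poly P t" using poly_line[OF assms(1)] by blast
  obtain Q where Q: "\<forall>t. g (lineP x1 x2 t) = poly Q t" using poly_line[OF assms(2)] by blast
  have "P \<noteq> 0" using P[rule_format, of 0] assms(5) by (auto simp: lineP_0)
  moreover have "Q \<noteq> 0" using Q[rule_format, of 1] assms(6) by (auto simp: lineP_1)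
  ultimately have "P * Q \<noteq> 0" by simp
  then have "finite {t. poly (P * Q) t = 0}" by (rule poly_roots_finite)
  then obtain t where "t \<notin> {t. poly (P * Q) t = 0}"
    using infinite_UNIV_char_0[where 'a='a] by (metis UNIV_I ex_new_if_finite)
  then have "f (lineP x1 x2 t) \<noteq> 0 \<and> g (lineP x1 x2 t) \<noteq> 0" using P Q by auto
  then show ?thesis using lineP_skew[OF assms(3,4)] by blast
qed

section \<open>An explicit generic point\<close>

definition psi :: "nat \<Rightarrow> 'n::finite" where
  "psi = inv_into UNIV idx"

lemma idx_psi: "k < CARD('n) \<Longrightarrow> idx (psi k :: 'n::finite) = k"
  unfolding psi_def using idx_bij[where 'n='n]
  by (simp add: bij_betw_inv_into_right)

lemma psi_idx: "psi (idx (b::'n::finite)) = b"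
  using idx_psi[OF idx_lt[of b]] idx_inj by blast

definition Mex :: "'a::field ^ 'n::finite ^ 'n" where
  "Mex = (\<chi> a b. if idx a = idx b + 1 then 1 else if idx b = idx a + 1 then -1 else 0)"

definition vex :: "'a::field ^ 'n::finite" where
  "vex = (\<chi> a. if idx a = 0 then 1 else 0)"

definition Eb :: "nat \<Rightarrow> 'a::field ^ 'n::finite" where
  "Eb k = (\<chi> a. if idx a = k then 1 else 0)"

lemma ex_skew: "((vex, Mex) :: ('a::field, 'n::finite) pt) \<in> skew_pts"
  unfolding skew_pts_def Mex_def by (auto simp: vec_eq_iff transpose_def)

lemma sum_idx: "k < CARD('n) \<Longrightarrow> (\<Sum>b\<in>(UNIV::'n::finite set). if idx b = k then (c::'a::field) else 0) = c"
proof -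
  assume k: "k < CARD('n)"
  have "\<forall>b::'n. (if idx b = k then c else 0) = (if b = psi k then c else 0)"
    using idx_psi[OF k] by (auto simp: psi_idx)
  then show ?thesis by simp
qed

lemma wv_ex:
  "(wv ((vex, Mex) :: ('a::field, 'n::finite) pt) k $ a = (if idx a = k then 1 else 0)) \<or> idx a < k"
proof (induction k arbitrary: a)
  case 0
  then show ?case by (simp add: wv_0 vex_def)
next
  case (Suc k)
  let ?u = "wv ((vex, Mex) :: ('a, 'n) pt) k"
  have u: "idx b > k \<Longrightarrow> ?u $ b = 0" "idx b = k \<Longrightarrow> ?u $ b = 1" for b
    using Suc[of b] by auto
  show ?case
  proof (cases "idx a < Suc k")
    case True then show ?thesis by simp
  next
    case False
    have "(Mex *v ?u) $ a = (if idx a = Suc k then 1 else 0)"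
    proof (cases "idx a = Suc k")
      case True
      have "\<forall>b. Mex $ a $ b * ?u $ b = (if idx b = k then 1 else 0)"
        using True u unfolding Mex_def by auto
      then have "(Mex *v ?u) $ a = (\<Sum>b\<in>(UNIV::'n set). if idx b = k then (1::'a) else 0)"
        unfolding matrix_vector_mult_def by simp
      also have "\<dots> = 1" using True idx_lt[of a] by (intro sum_idx) simp
      finally show ?thesis using True by simp
    next
      case False2: False
      have z: "Mex $ a $ b * ?u $ b = 0" for b
        using False False2 u[of b] unfolding Mex_def by auto
      have "(Mex *v ?u) $ a = 0" unfolding matrix_vector_mult_def by (simp add: z)
      then show ?thesis using False2 by simp
    qed
    then show ?thesis by (simp add: wv_Suc)
  qed
qed

lemma bil_Eb: "l < CARD('n) \<Longrightarrow> bil w (Eb l :: 'a::field ^ 'n::finite) = w $ psi l"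
proof -
  assume l: "l < CARD('n)"
  have "\<forall>b. w $ b * Eb l $ b = (if b = psi l then w $ psi l else 0)"
    unfolding Eb_def using idx_psi[OF l] by (auto simp: psi_idx)
  then show ?thesis unfolding bil_def by simp
qed

lemma yv_ex:
  "k < CARD('n) \<Longrightarrow> yv ((vex, Mex) :: ('a::field, 'n::finite) pt) k = Eb k"
proof (induction k rule: less_induct)
  case (less k)
  let ?x = "(vex, Mex) :: ('a, 'n) pt"
  have D: "Dv ?x l = 1" if "l < k" for l
  proof -
    have l: "l < CARD('n)" using that less.prems by simp
    have "Dv ?x l = bil (Eb l) (Eb l :: 'a ^ 'n)" using less.IH[OF that l] by (simp add: Dv_def)
    also have "\<dots> = 1" using l by (simp add: bil_Eb) (simp add: Eb_def idx_psi[OF l])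
    finally show ?thesis .
  qed
  have "yv ?x k = wv ?x k - (\<Sum>l<k. (wv ?x k $ psi l) *s Eb l)"
    using less by (subst yv_eq) (intro arg_cong2[where f="(-)"] refl sum.cong, auto simp: D bil_Eb)
  also have "\<dots> = Eb k"
  proof (rule iffD2[OF vec_eq_iff], rule allI)
    fix a
    have s: "(\<Sum>l<k. (wv ?x k $ psi l) *s Eb l) $ a = (if idx a < k then wv ?x k $ a else 0)"
    proof -
      have "(\<Sum>l<k. (wv ?x k $ psi l) *s Eb l) $ a = (\<Sum>l<k. if l = idx a then wv ?x k $ psi l else 0)"
        unfolding sum_component by (intro sum.cong) (auto simp: Eb_def)
      also have "\<dots> = (if idx a < k then wv ?x k $ psi (idx a) else 0)" by simp
      also have "psi (idx a) = a" using idx_psi[OF idx_lt[of a]] idx_inj by blast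
      finally show ?thesis .
    qed
    show "(wv ?x k - (\<Sum>l<k. (wv ?x k $ psi l) *s Eb l)) $ a = Eb k $ a"
      using wv_ex[of k a] s by (auto simp: Eb_def)
  qed
  finally show ?case .
qed

lemma Dv_ex: "l < CARD('n) \<Longrightarrow> Dv ((vex, Mex) :: ('a::field, 'n::finite) pt) l = 1"
proof -
  assume l: "l < CARD('n)"
  have "Dv ((vex, Mex) :: ('a, 'n) pt) l = bil (Eb l) (Eb l :: 'a ^ 'n)" using yv_ex[where 'a='a and 'n='n, OF l] by (simp add: Dv_def)
  also have "\<dots> = 1" using l by (simp add: bil_Eb) (simp add: Eb_def idx_psi[OF l])
  finally show ?thesis .
qed

lemma Ufin_ne: "((vex, Mex) :: ('a::field, 'n::finite) pt) \<in> Ufin"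
  unfolding Ufin_def Ulev_def using ex_skew Dv_ex[where 'a='a and 'n='n] by auto

lemma sq_exists:
  fixes x :: "('a::field_char_0, 'n::finite) pt"
  assumes SQ: "\<forall>x\<in>(Ufin::('a::field_char_0, 'n::finite) pt set). \<forall>i. \<exists>c. c ^ 2 = DD x i"
    and x: "x \<in> Ufin"
  shows "\<exists>e. sq x e"
proof -
  have "\<forall>i. \<exists>c. c ^ 2 = DD x i" using SQ x by blast
  then have "\<exists>e. \<forall>i. e i ^ 2 = DD x i" by (rule choice)
  then show ?thesis unfolding sq_def by blast
qed

lemma sq_flip: "sq x c \<Longrightarrow> (\<forall>i. e i = c i \<or> e i = - c i) \<Longrightarrow> sq x e"
  unfolding sq_def by (metis power2_minus)

theorem sep_generic:
  assumes SQ: "\<forall>x\<in>(Ufin::('a::field_char_0, 'n::finite) pt set). \<forall>i. \<exists>c. c ^ 2 = DD x i"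
  shows "separates_orbits TYPE('a \<times> 'n)"
proof -
  obtain G where G: "G \<in> polyfuns invariants_I" "(Ufin::('a, 'n) pt set) = {x\<in>skew_pts. G x \<noteq> 0}"
    using Ufin_G by blast
  have zo: "zariski_open (Ufin::('a, 'n) pt set)"
    unfolding zariski_open_def
    by (rule exI[of _ "{G}"]) (use G polyfuns_I_poly in auto)
  have ne: "(Ufin::('a, 'n) pt set) \<noteq> {}" using Ufin_ne by blast
  have main: "(\<exists>A\<in>orth_group. act A x = y) \<longleftrightarrow> (\<forall>f\<in>invariants_I. f x = f y)"
    if x: "x \<in> Ufin" and y: "y \<in> Ufin" for x y :: "('a, 'n) pt"
  proof
    assume "\<exists>A\<in>orth_group. act A x = y"
    then obtain A where A: "A \<in> orth_group" "act A x = y" by blast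
    show "\<forall>f\<in>invariants_I. f x = f y"
    proof
      fix f :: "('a, 'n) pt \<Rightarrow> 'a" assume "f \<in> invariants_I"
      then obtain k where "f = inv_k k" unfolding invariants_I_def by blast
      then show "f x = f y" using inv_k_act[OF A(1), of k x] A(2) by simp
    qed
  next
    assume inv: "\<forall>f\<in>invariants_I. f x = f y"
    obtain e where e: "sq x e" using sq_exists[OF SQ x] by blast
    have DDeq: "DD x i = DD y i" for i using RI_eq[OF RI_DD x y inv] .
    have ey: "sq y e" using e DDeq unfolding sq_def by simp
    have "slice x e = slice y e" unfolding slice_def
      using RI_eq[OF RI_cv x y inv] RI_eq[OF RI_cM x y inv] by simp
    then have eq: "act (Amat x e) x = act (Amat y e) y" using act_Amat[OF x e] act_Amat[OF y ey] by simp
    have Ay: "Amat y e \<in> orth_group" by (rule Amat_orth[OF y ey])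
    have Ax: "Amat x e \<in> orth_group" by (rule Amat_orth[OF x e])
    have "act (transpose (Amat y e) ** Amat x e) x = act (transpose (Amat y e)) (act (Amat y e) y)"
      by (simp add: act_act[symmetric] eq)
    also have "\<dots> = y" by (simp add: act_act orth_left[OF Ay] act_one)
    finally have "act (transpose (Amat y e) ** Amat x e) x = y" .
    moreover have "transpose (Amat y e) ** Amat x e \<in> orth_group"
      by (rule orth_mult[OF Ax orth_transpose[OF Ay]])
    ultimately show "\<exists>A\<in>orth_group. act A x = y" by blast
  qed
  show ?thesis unfolding separates_orbits_def using zo ne main by blast
qed

lemma MLf_act_v:
  fixes B :: "'a::field_char_0 ^ 'n::finite ^ 'n"
  shows "MLf (\<lambda>x e. fst (act B (slice x e)) $ i)"
proof -
  have "MLf (\<lambda>x e. \<Sum>j\<in>UNIV. B $ i $ j * (cv x j * e j))"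
    by (intro MLf_sum MLf_mult MLf_RI RI_const RI_cv MLf_eta) auto
  then show ?thesis unfolding act_def slice_def matrix_vector_mult_def by simp
qed

lemma MLf_act_M:
  fixes B :: "'a::field_char_0 ^ 'n::finite ^ 'n"
  shows "MLf (\<lambda>x e. snd (act B (slice x e)) $ i $ j)"
proof -
  have "MLf (\<lambda>x e. \<Sum>k\<in>UNIV. (\<Sum>l\<in>UNIV. B $ i $ l * (cM x l k * (e l * e k))) * B $ j $ k)"
    by (intro MLf_sum MLf_mult MLf_RI RI_const RI_cM MLf_eta) auto
  then show ?thesis unfolding act_def slice_def matrix_matrix_mult_def transpose_def by simp
qed

theorem gen_generic:
  assumes SQ: "\<forall>x\<in>(Ufin::('a::field_char_0, 'n::finite) pt set). \<forall>i. \<exists>c. c ^ 2 = DD x i"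
  shows "generates_invariant_field TYPE('a \<times> 'n)"
  unfolding generates_invariant_field_def
proof (intro conjI ballI allI impI)
  fix f :: "('a, 'n) pt \<Rightarrow> 'a" assume "f \<in> invariants_I"
  then obtain k where f: "f = inv_k k" unfolding invariants_I_def by blast
  have sk: "((0, 0) :: ('a, 'n) pt) \<in> skew_pts" unfolding skew_pts_def by (simp add: vec_eq_iff transpose_def)
  show "rat_invariant f (\<lambda>_. 1)" unfolding rat_invariant_def f
    using inv_k_poly[of k] sk inv_k_act[of _ k]
    by (auto simp: poly_funs_def intro: polyfuns.const)
next
  fix p q :: "('a, 'n) pt \<Rightarrow> 'a"
  assume pq: "rat_invariant p q"
  then have p: "p \<in> poly_funs" and q: "q \<in> poly_funs" and x1: "\<exists>x\<in>skew_pts. q x \<noteq> 0"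
    and inv: "\<forall>A\<in>orth_group. \<forall>x\<in>skew_pts. p (act A x) * q x = p x * q (act A x)"
    unfolding rat_invariant_def by auto
  obtain G where G: "G \<in> polyfuns invariants_I" "(Ufin::('a, 'n) pt set) = {x\<in>skew_pts. G x \<noteq> 0}"
    using Ufin_G by blast
  have Gp: "G \<in> poly_funs" using G(1) by (rule polyfuns_I_poly)
  have x2: "((vex, Mex) :: ('a, 'n) pt) \<in> skew_pts" "G (vex, Mex) \<noteq> 0" using Ufin_ne G(2) by auto
  obtain x1 where x1: "x1 \<in> skew_pts" "q x1 \<noteq> 0" using x1 by blast
  obtain x0 where x0: "x0 \<in> skew_pts" "q x0 \<noteq> 0" "G x0 \<noteq> 0"
    using two_nonzero[OF q Gp x1(1) x2(1) x1(2) x2(2)] by blast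
  have x0U: "x0 \<in> Ufin" using x0 G(2) by auto
  obtain e0 where e0: "sq x0 e0" using sq_exists[OF SQ x0U] by blast
  define A0 where "A0 = Amat x0 e0"
  have A0: "A0 \<in> orth_group" unfolding A0_def by (rule Amat_orth[OF x0U e0])
  define B where "B = transpose A0"
  have B: "B \<in> orth_group" unfolding B_def by (rule orth_transpose[OF A0])
  have "act B (slice x0 e0) = act B (act A0 x0)" by (simp add: A0_def act_Amat[OF x0U e0])
  also have "\<dots> = x0" unfolding B_def act_act orth_left[OF A0] act_one ..
  finally have B0: "act B (slice x0 e0) = x0" .
  have Mp: "MLf (\<lambda>x e. p (act B (slice x e)))"
    by (rule MLf_poly[OF p MLf_act_v MLf_act_M])
  have Mq: "MLf (\<lambda>x e. q (act B (slice x e)))"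
    by (rule MLf_poly[OF q MLf_act_v MLf_act_M])
  obtain \<alpha> where \<alpha>: "\<forall>S. RI Ufin (\<alpha> S)"
    "\<forall>x\<in>Ufin. \<forall>e. sq x e \<longrightarrow> p (act B (slice x e)) = (\<Sum>S\<in>UNIV. \<alpha> S x * (\<Prod>i\<in>S. e i))"
    using Mp unfolding MLf_def by blast
  obtain \<beta> where \<beta>: "\<forall>S. RI Ufin (\<beta> S)"
    "\<forall>x\<in>Ufin. \<forall>e. sq x e \<longrightarrow> q (act B (slice x e)) = (\<Sum>S\<in>UNIV. \<beta> S x * (\<Prod>i\<in>S. e i))"
    using Mq unfolding MLf_def by blast
  have key: "\<alpha> S x * q x = p x * \<beta> S x" if x: "x \<in> Ufin" for S x
  proof -
    obtain c where c: "sq x c" using sq_exists[OF SQ x] by blast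
    have "\<forall>S\<subseteq>UNIV. \<alpha> S x * q x - p x * \<beta> S x = 0"
    proof (rule grid[where c=c])
      show "finite (UNIV :: 'n set)" by simp
      show "\<forall>i\<in>UNIV. c i \<noteq> 0" using sq_nz[OF x c] by blast
      show "\<forall>e. (\<forall>i\<in>UNIV. e i = c i \<or> e i = - c i) \<longrightarrow>
          (\<Sum>S\<in>Pow UNIV. (\<alpha> S x * q x - p x * \<beta> S x) * (\<Prod>i\<in>S. e i)) = 0"
      proof (intro allI impI)
        fix e assume "\<forall>i\<in>UNIV. e i = c i \<or> e i = - c i"
        then have e: "sq x e" using sq_flip[OF c] by blast
        have s: "slice x e = act (Amat x e) x" using act_Amat[OF x e] by simp
        have o: "B ** Amat x e \<in> orth_group" by (rule orth_mult[OF Amat_orth[OF x e] B])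
        have "p (act B (slice x e)) * q x = p x * q (act B (slice x e))"
          unfolding s act_act using inv o Ufin_skew[OF x] by blast
        then have "(\<Sum>S\<in>UNIV. \<alpha> S x * (\<Prod>i\<in>S. e i)) * q x = p x * (\<Sum>S\<in>UNIV. \<beta> S x * (\<Prod>i\<in>S. e i))"
          using \<alpha>(2) \<beta>(2) x e by simp
        then show "(\<Sum>S\<in>Pow UNIV. (\<alpha> S x * q x - p x * \<beta> S x) * (\<Prod>i\<in>S. e i)) = 0"
          by (simp add: sum_distrib_left sum_distrib_right sum_subtractf algebra_simps)
      qed
    qed
    then show ?thesis by simp
  qed
  have "q (act B (slice x0 e0)) \<noteq> 0" using B0 x0 by simp
  then have "(\<Sum>S\<in>UNIV. \<beta> S x0 * (\<Prod>i\<in>S. e0 i)) \<noteq> 0" using \<beta>(2) x0U e0 by simp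
  then obtain T where T: "\<beta> T x0 \<noteq> 0" by (metis (mono_tags, lifting) mult_eq_0_iff sum.neutral)
  obtain Pa Qa where Pa: "Pa \<in> polyfuns invariants_I" "Qa \<in> polyfuns invariants_I"
    "\<forall>x\<in>Ufin. Qa x \<noteq> 0 \<and> \<alpha> T x = Pa x / Qa x" using \<alpha>(1) unfolding RI_def by blast
  obtain Pb Qb where Pb: "Pb \<in> polyfuns invariants_I" "Qb \<in> polyfuns invariants_I"
    "\<forall>x\<in>Ufin. Qb x \<noteq> 0 \<and> \<beta> T x = Pb x / Qb x" using \<beta>(1) unfolding RI_def by blast
  have Pin: "(\<lambda>x. Pa x * Qb x * G x) \<in> polyfuns invariants_I"
    using Pa Pb G by (intro polyfuns.mult)
  have Qin: "(\<lambda>x. Pb x * Qa x * G x) \<in> polyfuns invariants_I"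
    using Pa Pb G by (intro polyfuns.mult)
  have Qnz: "Pb x0 * Qa x0 * G x0 \<noteq> 0" using T Pa(3) Pb(3) x0U x0(3) by auto
  have eqn: "p x * (Pb x * Qa x * G x) = q x * (Pa x * Qb x * G x)" if x: "x \<in> skew_pts" for x
  proof (cases "G x = 0")
    case True then show ?thesis by simp
  next
    case False
    then have xU: "x \<in> Ufin" using x G(2) by auto
    have "\<alpha> T x * q x = p x * \<beta> T x" by (rule key[OF xU])
    then have "Pa x / Qa x * q x = p x * (Pb x / Qb x)" using Pa(3) Pb(3) xU by simp
    then have "Pa x * q x * Qb x = p x * Pb x * Qa x" using Pa(3) Pb(3) xU
      by (simp add: field_simps)
    then show ?thesis by (simp add: algebra_simps)
  qed
  show "in_generated_field p q" unfolding in_generated_field_def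
    apply (rule bexI[OF _ Pin])
    apply (rule bexI[OF _ Qin])
    using x0(1) Qnz eqn by blast
qed

lemma SQ_complex: "\<forall>x\<in>(Ufin::(complex, 'n::finite) pt set). \<forall>i. \<exists>c. c ^ 2 = DD x i"
  using power2_csqrt by blast

lemma SQ_real: "\<forall>x\<in>(Ufin::(real, 'n::finite) pt set). \<forall>i. \<exists>c. c ^ 2 = DD x i"
proof (intro ballI allI)
  fix x :: "(real, 'n) pt" and i :: 'n
  have "DD x i \<ge> 0" unfolding DD_def Dv_def bil_def by (intro sum_nonneg) simp
  then show "\<exists>c. c ^ 2 = DD x i" using real_sqrt_pow2 by blast
qed

theorem proposition3p17:
  assumes "CARD('n::finite) \<ge> 2"
  shows "generates_invariant_field TYPE(complex \<times> 'n) \<and>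
         generates_invariant_field TYPE(real \<times> 'n) \<and>
         separates_orbits TYPE(complex \<times> 'n) \<and>
         separates_orbits TYPE(real \<times> 'n)"
  using gen_generic[OF SQ_complex] gen_generic[OF SQ_real]
        sep_generic[OF SQ_complex] sep_generic[OF SQ_real] by blast

end
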